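(* Fix $h\in[H]$ and a factored model $M\in\mathcal M$. Sample a dataset $\{(x_h^{(i)},a_h^{(i)},r_h^{(i)},x_{h+1}^{(i)})\}_{i=1}^n$ i.i.d. with $x_h^{(i)}\sim\pi_M$, $a_h^{(i)}\sim U(\mathcal A)$, $(r_h^{(i)},x_{h+1}^{(i)})\sim M^\star_h$. Fix $\phi>0$ and $\delta>0$. If $n\ge\frac{8d^2(L\log(8d|\mathcal O|/\phi)+\log(2/\delta))}{\phi^2}$, then with probability at least $1-\delta$, for all $M'\in\mathcal M$, $|\hat{\mathcal W}_F(M,M',h)-\mathcal W_F(M,M',h)|\le\phi$.
   Context: Factored MDP setting: $\mathcal O$ finite, $\mathcal X=[H]\times\mathcal O^d$ layered by time, $|\mathcal A|=K$; parent sets $\mathrm{pa}_i\subseteq[d]$ known; transitions $P(x'|x,a)=\prod_{i=1}^dP^{(i)}[x'[i]\mid x[\mathrm{pa}_i],a,h]$ for $x\in\mathcal X_h$; known reward function $R^\star$ shared by all models. $\mathcal M$ is the (infinite) set of all models with reward $R^\star$ and transitions factorizing with these parent sets; the true model $M^\star\in\mathcal M$. $L=\sum_{i=1}^dHK|\mathcal O|^{1+|\mathrm{pa}_i|}$. For a model $M$, $\pi_M$ is its greedy optimal policy; $x_h\sim\pi$ is the step-$h$ context when running $\pi$ in the true MDP; $(r,x')\sim M_h$ means $r\sim R^\star(x_h,a_h)$, $x'\sim P(x_h,a_h)$. Test class $\mathcal F=\{g_1+\dots+g_d: g_i\in\mathcal G_i\}$ where $\mathcal G_i$ is the set of all functions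 of $(x,a,r,x')$ depending only on $(x[\mathrm{pa}_i],a,h,x'[i])$ (with $h$ the time step of $x$) and taking values in $\{-1,1\}$. $\mathcal W_F(M,M',h)=\max_{f\in\mathcal F}\mathbb E_{x_h\sim\pi_M,a_h\sim U(\mathcal A)}[\mathbb E_{(r,x')\sim M'_h}f(x_h,a_h,r,x')-\mathbb E_{(r,x')\sim M^\star_h}f(x_h,a_h,r,x')]$, and $\hat{\mathcal W}_F(M,M',h)=\max_{f\in\mathcal F}\frac1n\sum_{i=1}^n\big(\mathbb E_{(r,x')\sim M'_h}f(x_h^{(i)},a_h^{(i)},r,x')-f(x_h^{(i)},a_h^{(i)},r_h^{(i)},x_{h+1}^{(i)})\big)$. *)

theory Defs
  imports "HOL-Probability.Probability" "HOL-Probability.Product_PMF"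
begin

text \<open>
Observations: finite type 'o. Factors (coordinates) [d]: finite type 'd,
so d = CARD('d). A context at time step h is
the pair (h, x) with x :: 'd \<Rightarrow> 'o; time steps are 1..H.
A factored model is given by its factor kernels
  M i h y a = P^(i)[ . | y, a, h ]
where y is the restriction x[pa_i] of the current observation vector; the full
transition is the product over the factors. Every such M (with the fixed reward R)
is an element of the model class; conversely every element arises this way.
Rewards: R h x a is the (known, shared) reward distribution.
\<close>

type_synonym ('d,'o,'a) model = "'d \<Rightarrow> nat \<Rightarrow> ('d \<Rightarrow> 'o) \<Rightarrow> 'a \<Rightarrow> 'o pmf"
type_synonym ('d,'o,'a) rewardfn = "nat \<Rightarrow> ('d \<Rightarrow> 'o) \<Rightarrow> 'a \<Rightarrow> real pmf"
type_synonym ('d,'o,'a) policy = "nat \<Rightarrow> ('d \<Rightarrow> 'o) \<Rightarrow> 'a"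

definition proj :: "'d set \<Rightarrow> ('d \<Rightarrow> 'o) \<Rightarrow> ('d \<Rightarrow> 'o)" where
  "proj A x = restrict x A"

definition trans :: "('d::finite \<Rightarrow> 'd set) \<Rightarrow> ('d,'o,'a) model \<Rightarrow> nat \<Rightarrow> ('d \<Rightarrow> 'o) \<Rightarrow> 'a \<Rightarrow> ('d \<Rightarrow> 'o) pmf" where
  "trans pa M h x a = Pi_pmf UNIV undefined (\<lambda>i. M i h (proj (pa i) x) a)"

definition step_pmf :: "('d::finite \<Rightarrow> 'd set) \<Rightarrow> ('d,'o,'a) rewardfn \<Rightarrow> ('d,'o,'a) model
    \<Rightarrow> nat \<Rightarrow> ('d \<Rightarrow> 'o) \<Rightarrow> 'a \<Rightarrow> (real \<times> ('d \<Rightarrow> 'o)) pmf" where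
  "step_pmf pa R M h x a = pair_pmf (R h x a) (trans pa M h x a)"

definition mean_reward :: "('d,'o,'a) rewardfn \<Rightarrow> nat \<Rightarrow> ('d \<Rightarrow> 'o) \<Rightarrow> 'a \<Rightarrow> real" where
  "mean_reward R h x a = measure_pmf.expectation (R h x a) (\<lambda>r. r)"

text \<open>Optimal value with k steps remaining, starting at time step h (model M).\<close>
fun Vrem :: "('d::finite \<Rightarrow> 'd set) \<Rightarrow> ('d,'o::finite,'a::finite) rewardfn \<Rightarrow> ('d,'o,'a) model
    \<Rightarrow> nat \<Rightarrow> nat \<Rightarrow> ('d \<Rightarrow> 'o) \<Rightarrow> real" where
  "Vrem pa R M 0 h x = 0"
| "Vrem pa R M (Suc k) h x =
     (MAX a\<in>UNIV. mean_reward R h x a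
        + measure_pmf.expectation (trans pa M h x a) (Vrem pa R M k (Suc h)))"

definition Qopt :: "nat \<Rightarrow> ('d::finite \<Rightarrow> 'd set) \<Rightarrow> ('d,'o::finite,'a::finite) rewardfn \<Rightarrow> ('d,'o,'a) model
    \<Rightarrow> nat \<Rightarrow> ('d \<Rightarrow> 'o) \<Rightarrow> 'a \<Rightarrow> real" where
  "Qopt H pa R M h x a = mean_reward R h x a
     + measure_pmf.expectation (trans pa M h x a) (Vrem pa R M (H - h) (Suc h))"

definition greedy_optimal :: "nat \<Rightarrow> ('d::finite \<Rightarrow> 'd set) \<Rightarrow> ('d,'o::finite,'a::finite) rewardfn
    \<Rightarrow> ('d,'o,'a) model \<Rightarrow> ('d,'o,'a) policy \<Rightarrow> bool" where
  "greedy_optimal H pa R M \<pi> \<longleftrightarrow>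
     (\<forall>h\<in>{1..H}. \<forall>x. \<forall>a. Qopt H pa R M h x a \<le> Qopt H pa R M h x (\<pi> h x))"

text \<open>Distribution of x_{k+1} when running \<pi> in the true model Mstar from initial
distribution mu0 of x_1.\<close>
fun roll :: "('d::finite \<Rightarrow> 'd set) \<Rightarrow> ('d \<Rightarrow> 'o) pmf \<Rightarrow> ('d,'o,'a) model \<Rightarrow> ('d,'o,'a) policy
    \<Rightarrow> nat \<Rightarrow> ('d \<Rightarrow> 'o) pmf" where
  "roll pa mu0 Mstar \<pi> 0 = mu0"
| "roll pa mu0 Mstar \<pi> (Suc k) =
     bind_pmf (roll pa mu0 Mstar \<pi> k) (\<lambda>x. trans pa Mstar (Suc k) x (\<pi> (Suc k) x))"

definition state_dist :: "('d::finite \<Rightarrow> 'd set) \<Rightarrow> ('d \<Rightarrow> 'o) pmf \<Rightarrow> ('d,'o,'a) model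
    \<Rightarrow> ('d,'o,'a) policy \<Rightarrow> nat \<Rightarrow> ('d \<Rightarrow> 'o) pmf" where
  "state_dist pa mu0 Mstar \<pi> h = roll pa mu0 Mstar \<pi> (h - 1)"

definition testF :: "('d::finite \<Rightarrow> 'd set)
    \<Rightarrow> (nat \<Rightarrow> ('d \<Rightarrow> 'o) \<Rightarrow> 'a \<Rightarrow> real \<Rightarrow> ('d \<Rightarrow> 'o) \<Rightarrow> real) set" where
  "testF pa = {f. \<exists>g :: 'd \<Rightarrow> nat \<Rightarrow> ('d \<Rightarrow> 'o) \<Rightarrow> 'a \<Rightarrow> 'o \<Rightarrow> real.
       (\<forall>i h y a ob. g i h y a ob \<in> {-1, 1}) \<and>
       f = (\<lambda>h x a r x'. \<Sum>i\<in>UNIV. g i h (proj (pa i) x) a (x' i))}"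

definition W_F :: "('d::finite \<Rightarrow> 'd set) \<Rightarrow> ('d,'o,'a::finite) rewardfn \<Rightarrow> ('d \<Rightarrow> 'o) pmf
    \<Rightarrow> ('d,'o,'a) model \<Rightarrow> ('d,'o,'a) policy \<Rightarrow> ('d,'o,'a) model \<Rightarrow> nat \<Rightarrow> real" where
  "W_F pa R mu0 Mstar \<pi>M M' h =
    (SUP f\<in>testF pa.
       measure_pmf.expectation
         (pair_pmf (state_dist pa mu0 Mstar \<pi>M h) (pmf_of_set (UNIV :: 'a set)))
         (\<lambda>(x, a). measure_pmf.expectation (step_pmf pa R M' h x a) (\<lambda>(r, x'). f h x a r x')
                 - measure_pmf.expectation (step_pmf pa R Mstar h x a) (\<lambda>(r, x'). f h x a r x')))"

text \<open>Empirical estimate from data D(i) = (x_h^(i), a_h^(i), r_h^(i), x_{h+1}^(i)), i < n.\<close>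
definition W_F_hat :: "('d::finite \<Rightarrow> 'd set) \<Rightarrow> ('d,'o,'a) rewardfn \<Rightarrow> ('d,'o,'a) model \<Rightarrow> nat
    \<Rightarrow> nat \<Rightarrow> (nat \<Rightarrow> ('d \<Rightarrow> 'o) \<times> 'a \<times> real \<times> ('d \<Rightarrow> 'o)) \<Rightarrow> real" where
  "W_F_hat pa R M' h n D =
    (SUP f\<in>testF pa. (1 / real n) * (\<Sum>i<n. case D i of (x, a, r, x') \<Rightarrow>
        measure_pmf.expectation (step_pmf pa R M' h x a) (\<lambda>(r', x''). f h x a r' x'')
        - f h x a r x'))"

definition sample_pmf :: "('d::finite \<Rightarrow> 'd set) \<Rightarrow> ('d,'o,'a::finite) rewardfn \<Rightarrow> ('d \<Rightarrow> 'o) pmf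
    \<Rightarrow> ('d,'o,'a) model \<Rightarrow> ('d,'o,'a) policy \<Rightarrow> nat \<Rightarrow> (('d \<Rightarrow> 'o) \<times> 'a \<times> real \<times> ('d \<Rightarrow> 'o)) pmf" where
  "sample_pmf pa R mu0 Mstar \<pi>M h =
     do { x \<leftarrow> state_dist pa mu0 Mstar \<pi>M h;
          a \<leftarrow> pmf_of_set (UNIV :: 'a set);
          (r, x') \<leftarrow> step_pmf pa R Mstar h x a;
          return_pmf (x, a, r, x') }"

definition dataset_pmf :: "nat \<Rightarrow> 'b pmf \<Rightarrow> (nat \<Rightarrow> 'b) pmf" where
  "dataset_pmf n p = Pi_pmf {..<n} undefined (\<lambda>_. p)"

definition Lparam :: "nat \<Rightarrow> ('d::finite \<Rightarrow> 'd set) \<Rightarrow> 'o itself \<Rightarrow> 'a itself \<Rightarrow> real" where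
  "Lparam H pa (_ :: 'o itself) (_ :: 'a itself) =
     (\<Sum>i\<in>UNIV. real H * real CARD('a) * real CARD('o) ^ (1 + card (pa i)))"

end

theory Submission
  imports Defs
begin

lemma hoeff_pmf:
  fixes p :: "'b pmf" and Y :: "'b \<Rightarrow> real"
  assumes Y: "\<And>x. Y x \<in> {-1..1}" and n: "n > 0" and t: "t \<ge> 0"
  shows "measure_pmf.prob (Pi_pmf {..<n} dflt (\<lambda>_. p))
           {D. (\<Sum>i<n. Y (D i)) / real n \<ge> measure_pmf.expectation p Y + t}
         \<le> exp (- real n * t^2 / 2)"
proof -
  define P where "P = Pi_pmf {..<n} dflt (\<lambda>_. p)"
  have comp: "map_pmf (\<lambda>D. D i) P = p" if "i < n" for i
    using that by (simp add: P_def Pi_pmf_component)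
  have EX: "measure_pmf.expectation P (\<lambda>D. Y (D i)) = measure_pmf.expectation p Y" if "i < n" for i
  proof -
    have "measure_pmf.expectation P (\<lambda>D. Y (D i)) = measure_pmf.expectation (map_pmf (\<lambda>D. D i) P) Y"
      by simp
    then show ?thesis using comp[OF that] by simp
  qed
  interpret H: Hoeffding_ineq "measure_pmf P" "{..<n}" "\<lambda>i D. Y (D i)" "\<lambda>_. -1" "\<lambda>_. 1"
     "(\<Sum>i<n. measure_pmf.expectation P (\<lambda>D. Y (D i)))"
  proof unfold_locales
    show "prob_space.indep_vars (measure_pmf P) (\<lambda>_. borel) (\<lambda>i D. Y (D i)) {..<n}"
      unfolding P_def
      by (intro prob_space.indep_vars_compose2[OF _ indep_vars_Pi_pmf])
         (auto simp: measure_pmf.prob_space_axioms)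
  qed (use Y in auto)
  have mu: "(\<Sum>i<n. measure_pmf.expectation P (\<lambda>D. Y (D i))) = real n * measure_pmf.expectation p Y"
    using EX by simp
  have "measure_pmf.prob P {x\<in>space (measure_pmf P). (\<Sum>i<n. Y (x i)) \<ge> real n * measure_pmf.expectation p Y + real n * t}
      \<le> exp (-2 * (real n * t)\<^sup>2 / (\<Sum>i<n. (1 - (-1::real))\<^sup>2))"
    using H.Hoeffding_ineq_ge[of "real n * t"] t n mu by simp
  also have "\<dots> = exp (- real n * t^2 / 2)"
    using n by (simp add: power2_eq_square field_simps)
  also have "{x\<in>space (measure_pmf P). (\<Sum>i<n. Y (x i)) \<ge> real n * measure_pmf.expectation p Y + real n * t}
     = {D. (\<Sum>i<n. Y (D i)) / real n \<ge> measure_pmf.expectation p Y + t}"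
    using n by (auto simp: field_simps)
  finally show ?thesis unfolding P_def .
qed


definition emp :: "('b \<Rightarrow> 'z) \<Rightarrow> nat \<Rightarrow> (nat \<Rightarrow> 'b) \<Rightarrow> 'z \<Rightarrow> real" where
  "emp \<phi> n D z = (\<Sum>i<n. if \<phi> (D i) = z then 1 else 0) / real n"

definition devS :: "'z set \<Rightarrow> 'b pmf \<Rightarrow> ('b \<Rightarrow> 'z) \<Rightarrow> nat \<Rightarrow> (nat \<Rightarrow> 'b) \<Rightarrow> real" where
  "devS Zs p \<phi> n D = (\<Sum>z\<in>Zs. \<bar>emp \<phi> n D z - pmf (map_pmf \<phi> p) z\<bar>)"

lemma emp_sum:
  assumes "finite Zs" "\<And>x. \<phi> x \<in> Zs"
  shows "(\<Sum>z\<in>Zs. emp \<phi> n D z * G z) = (\<Sum>i<n. G (\<phi> (D i))) / real n"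
proof -
  have "(\<Sum>z\<in>Zs. emp \<phi> n D z * G z) = (\<Sum>z\<in>Zs. \<Sum>i<n. (if \<phi> (D i) = z then G z else 0)) / real n"
  proof -
    have "emp \<phi> n D z * G z = (\<Sum>i<n. (if \<phi> (D i) = z then G z else 0)) / real n" for z
    proof -
      have "emp \<phi> n D z * G z = (\<Sum>i<n. (if \<phi> (D i) = z then 1 else 0) * G z) / real n"
        unfolding emp_def by (simp add: sum_distrib_right)
      also have "\<dots> = (\<Sum>i<n. (if \<phi> (D i) = z then G z else 0)) / real n"
        by (intro arg_cong2[where f="(/)"] sum.cong refl) auto
      finally show ?thesis .
    qed
    then show ?thesis by (simp add: sum_divide_distrib)
  qed
  also have "(\<Sum>z\<in>Zs. \<Sum>i<n. (if \<phi> (D i) = z then G z else 0)) = (\<Sum>i<n. \<Sum>z\<in>Zs. (if \<phi> (D i) = z then G z else 0))"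
    by (rule sum.swap)
  also have "\<dots> = (\<Sum>i<n. G (\<phi> (D i)))"
    using assms by (intro sum.cong refl) (simp add: sum.delta')
  finally show ?thesis .
qed

lemma exp_sum:
  fixes G :: "'z \<Rightarrow> real"
  assumes "finite Zs" "\<And>x. \<phi> x \<in> Zs"
  shows "measure_pmf.expectation p (\<lambda>x. G (\<phi> x)) = (\<Sum>z\<in>Zs. pmf (map_pmf \<phi> p) z * G z)"
proof -
  have "measure_pmf.expectation p (\<lambda>x. G (\<phi> x)) = measure_pmf.expectation (map_pmf \<phi> p) G"
    by simp
  also have "\<dots> = (\<Sum>z\<in>Zs. G z * pmf (map_pmf \<phi> p) z)"
    by (rule integral_measure_pmf_real) (use assms in auto)
  finally show ?thesis by (simp add: mult.commute)
qed

lemma ident: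
  fixes G :: "'z \<Rightarrow> real"
  assumes "finite Zs" "\<And>x. \<phi> x \<in> Zs"
  shows "(\<Sum>i<n. G (\<phi> (D i))) / real n - measure_pmf.expectation p (\<lambda>x. G (\<phi> x))
       = (\<Sum>z\<in>Zs. (emp \<phi> n D z - pmf (map_pmf \<phi> p) z) * G z)"
  using emp_sum[OF assms, where n=n and D=D and G=G] exp_sum[OF assms, where p=p and G=G] by (simp add: left_diff_distrib sum_subtractf)

lemma L1:
  fixes G :: "'z \<Rightarrow> real"
  assumes "finite Zs" "\<And>x. \<phi> x \<in> Zs" "\<And>z. z \<in> Zs \<Longrightarrow> \<bar>G z\<bar> \<le> c"
  shows "\<bar>(\<Sum>i<n. G (\<phi> (D i))) / real n - measure_pmf.expectation p (\<lambda>x. G (\<phi> x))\<bar>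
       \<le> c * devS Zs p \<phi> n D"
proof -
  have "\<bar>\<Sum>z\<in>Zs. (emp \<phi> n D z - pmf (map_pmf \<phi> p) z) * G z\<bar>
      \<le> (\<Sum>z\<in>Zs. \<bar>(emp \<phi> n D z - pmf (map_pmf \<phi> p) z) * G z\<bar>)" by (rule sum_abs)
  also have "\<dots> \<le> (\<Sum>z\<in>Zs. c * \<bar>emp \<phi> n D z - pmf (map_pmf \<phi> p) z\<bar>)"
    by (intro sum_mono) (use assms(3) in \<open>auto simp: abs_mult mult.commute[of c] intro!: mult_left_mono\<close>)
  finally show ?thesis using ident[where \<phi>=\<phi> and n=n and D=D and p=p and G=G, OF assms(1,2)]
    by (simp add: devS_def sum_distrib_left)
qed

lemma dev_le2:
  assumes "finite Zs" "\<And>x. \<phi> x \<in> Zs"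
  shows "devS Zs p \<phi> n D \<le> 2"
proof -
  have e0: "emp \<phi> n D z \<ge> 0" for z unfolding emp_def by (intro divide_nonneg_nonneg sum_nonneg) auto
  have "devS Zs p \<phi> n D \<le> (\<Sum>z\<in>Zs. emp \<phi> n D z + pmf (map_pmf \<phi> p) z)"
    unfolding devS_def by (intro sum_mono) (use e0 in \<open>auto simp: abs_if\<close>)
  also have "\<dots> = (\<Sum>z\<in>Zs. emp \<phi> n D z * 1) + (\<Sum>z\<in>Zs. pmf (map_pmf \<phi> p) z * 1)"
    by (simp add: sum.distrib)
  also have "\<dots> = (\<Sum>i<n. 1) / real n + measure_pmf.expectation p (\<lambda>x. 1)"
    by (simp only: emp_sum[OF assms, where n=n and D=D and G="\<lambda>_. 1"] exp_sum[OF assms, where p=p and G="\<lambda>_. 1", symmetric])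
  also have "\<dots> \<le> 2" by simp
  finally show ?thesis .
qed

lemma dev_sign:
  "devS Zs p \<phi> n D = (\<Sum>z\<in>Zs. (emp \<phi> n D z - pmf (map_pmf \<phi> p) z)
      * (if emp \<phi> n D z \<ge> pmf (map_pmf \<phi> p) z then 1 else -1))"
  unfolding devS_def by (intro sum.cong refl) auto

lemma expectation_bind_pmf:
  fixes f :: "'b \<Rightarrow> real"
  assumes "\<And>x. \<bar>f x\<bar> \<le> B"
  shows "measure_pmf.expectation (bind_pmf M N) f = measure_pmf.expectation M (\<lambda>x. measure_pmf.expectation (N x) f)"
  unfolding measure_pmf_bind
proof (rule integral_bind[where K="count_space UNIV" and B=B and B'=1])
  show "(\<lambda>x. measure_pmf (N x)) \<in> measurable (measure_pmf M) (subprob_algebra (count_space UNIV))"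
    using measurable_measure_pmf[of N] by (simp add: measurable_def)
qed (auto intro: assms measure_pmf.finite_measure_axioms simp: measure_pmf.emeasure_space_1)

lemma abs_expectation_le:
  fixes f :: "'b \<Rightarrow> real"
  assumes "\<And>x. \<bar>f x\<bar> \<le> B"
  shows "\<bar>measure_pmf.expectation p f\<bar> \<le> B"
proof -
  have B: "B \<ge> 0" using assms[of undefined] by simp
  have i: "integrable (measure_pmf p) f"
    by (rule measure_pmf.integrable_const_bound[where B=B]) (use assms in auto)
  have "\<bar>measure_pmf.expectation p f\<bar> \<le> measure_pmf.expectation p (\<lambda>x. \<bar>f x\<bar>)"
    by (rule integral_abs_bound)
  also have "\<dots> \<le> measure_pmf.expectation p (\<lambda>x. B)"
    by (intro integral_mono) (use i assms in auto)
  finally show ?thesis by simp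
qed


definition featj :: "('d::finite \<Rightarrow> 'd set) \<Rightarrow> 'd \<Rightarrow> ('d \<Rightarrow> 'o) \<times> 'a \<times> real \<times> ('d \<Rightarrow> 'o) \<Rightarrow> ('d \<Rightarrow> 'o) \<times> 'a \<times> 'o" where
  "featj pa j s = (case s of (x, a, r, x') \<Rightarrow> (proj (pa j) x, a, x' j))"

definition Zset :: "('d::finite \<Rightarrow> 'd set) \<Rightarrow> 'd \<Rightarrow> (('d \<Rightarrow> 'o) \<times> 'a \<times> 'o) set" where
  "Zset pa j = range (proj (pa j)) \<times> UNIV \<times> UNIV"

lemma featj_in: "featj pa j s \<in> Zset pa j"
  unfolding featj_def Zset_def by (auto split: prod.splits)

definition Hfun :: "('d, 'o, 'a) model \<Rightarrow> ('d \<Rightarrow> nat \<Rightarrow> ('d \<Rightarrow> 'o) \<Rightarrow> 'a \<Rightarrow> 'o \<Rightarrow> real) \<Rightarrow> nat \<Rightarrow> 'd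
   \<Rightarrow> ('d \<Rightarrow> 'o) \<times> 'a \<times> 'o \<Rightarrow> real" where
  "Hfun M' g h j z = (case z of (y, a, ob) \<Rightarrow> measure_pmf.expectation (M' j h y a) (g j h y a) - g j h y a ob)"

lemma Hfun_bound:
  assumes "\<forall>i h y a ob. g i h y a ob \<in> {-1, 1}"
  shows "\<bar>Hfun M' g h j z\<bar> \<le> 2"
proof -
  obtain y a ob where z: "z = (y, a, ob)" by (cases z) auto
  have b: "\<bar>g j h y a o'\<bar> \<le> 1" for o'
  proof -
    have "g j h y a o' \<in> {-1, 1}" using assms by blast
    then show ?thesis by auto
  qed
  have "\<bar>measure_pmf.expectation (M' j h y a) (g j h y a)\<bar> \<le> 1"
    by (rule abs_expectation_le) (use b in auto)
  then show ?thesis using b[of ob] unfolding Hfun_def z by simp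
qed

lemma trans_comp: "map_pmf (\<lambda>x'. x' j) (trans pa M h x a) = M j h (proj (pa j) x) a"
  unfolding trans_def by (simp add: Pi_pmf_component)

lemma step_snd:
  fixes F :: "('d::finite \<Rightarrow> 'o) \<Rightarrow> real"
  shows "measure_pmf.expectation (step_pmf pa R M h x a) (\<lambda>(r, x'). F x')
       = measure_pmf.expectation (trans pa M h x a) F"
proof -
  have "(\<lambda>(r::real, x'). F x') = (\<lambda>z. F (snd z))" by auto
  then have "measure_pmf.expectation (step_pmf pa R M h x a) (\<lambda>(r, x'). F x')
      = measure_pmf.expectation (map_pmf snd (step_pmf pa R M h x a)) F" by simp
  then show ?thesis by (simp add: step_pmf_def map_snd_pair_pmf)
qed

lemma step_sum:
  fixes G :: "'d::finite \<Rightarrow> 'o::finite \<Rightarrow> real"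
  shows "measure_pmf.expectation (step_pmf pa R M h x a) (\<lambda>(r, x'). \<Sum>j\<in>UNIV. G j (x' j))
       = (\<Sum>j\<in>UNIV. measure_pmf.expectation (M j h (proj (pa j) x) a) (G j))"
proof -
  have "measure_pmf.expectation (step_pmf pa R M h x a) (\<lambda>(r, x'). \<Sum>j\<in>UNIV. G j (x' j))
      = measure_pmf.expectation (trans pa M h x a) (\<lambda>x'. \<Sum>j\<in>UNIV. G j (x' j))"
    by (rule step_snd)
  also have "\<dots> = (\<Sum>j\<in>UNIV. measure_pmf.expectation (trans pa M h x a) (\<lambda>x'. G j (x' j)))"
    by (rule Bochner_Integration.integral_sum) (simp add: integrable_measure_pmf_finite)
  also have "\<dots> = (\<Sum>j\<in>UNIV. measure_pmf.expectation (map_pmf (\<lambda>x'. x' j) (trans pa M h x a)) (G j))"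
    by simp
  finally show ?thesis by (simp add: trans_comp)
qed

lemma step_lin:
  fixes G :: "'o::finite \<Rightarrow> real" and j :: "'d::finite"
  shows "measure_pmf.expectation (step_pmf pa R M h x a) (\<lambda>(r, x'). c - G (x' j))
       = c - measure_pmf.expectation (M j h (proj (pa j) x) a) G"
proof -
  have "measure_pmf.expectation (step_pmf pa R M h x a) (\<lambda>(r, x'). c - G (x' j))
      = measure_pmf.expectation (trans pa M h x a) (\<lambda>x'. c - G (x' j))"
    by (rule step_snd)
  also have "\<dots> = c - measure_pmf.expectation (trans pa M h x a) (\<lambda>x'. G (x' j))"
    by (subst Bochner_Integration.integral_diff) (auto simp: integrable_measure_pmf_finite)
  also have "measure_pmf.expectation (trans pa M h x a) (\<lambda>x'. G (x' j))
     = measure_pmf.expectation (map_pmf (\<lambda>x'. x' j) (trans pa M h x a)) G"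
    by simp
  finally show ?thesis by (simp add: trans_comp)
qed

lemma triple_bind:
  fixes F :: "'x \<times> 'y \<times> 'w \<Rightarrow> real"
  assumes "\<And>z. \<bar>F z\<bar> \<le> B"
  shows "measure_pmf.expectation (bind_pmf p1 (\<lambda>x. bind_pmf p2 (\<lambda>a. bind_pmf (K x a) (\<lambda>w. return_pmf (x, a, w))))) F
       = measure_pmf.expectation (pair_pmf p1 p2) (\<lambda>(x, a). measure_pmf.expectation (K x a) (\<lambda>w. F (x, a, w)))"
proof -
  have b1: "\<bar>measure_pmf.expectation (K x a) (\<lambda>w. F (x, a, w))\<bar> \<le> B" for x a
    by (rule abs_expectation_le) (use assms in auto)
  have b2: "\<bar>measure_pmf.expectation p2 (\<lambda>a. measure_pmf.expectation (K x a) (\<lambda>w. F (x, a, w)))\<bar> \<le> B" for x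
    by (rule abs_expectation_le) (use b1 in auto)
  have "measure_pmf.expectation (bind_pmf p1 (\<lambda>x. bind_pmf p2 (\<lambda>a. bind_pmf (K x a) (\<lambda>w. return_pmf (x, a, w))))) F
      = measure_pmf.expectation p1 (\<lambda>x. measure_pmf.expectation (bind_pmf p2 (\<lambda>a. bind_pmf (K x a) (\<lambda>w. return_pmf (x, a, w)))) F)"
    by (rule expectation_bind_pmf) (use assms in auto)
  also have "\<dots> = measure_pmf.expectation p1 (\<lambda>x. measure_pmf.expectation p2 (\<lambda>a. measure_pmf.expectation (bind_pmf (K x a) (\<lambda>w. return_pmf (x, a, w))) F))"
    by (intro Bochner_Integration.integral_cong refl expectation_bind_pmf) (use assms in auto)
  also have "\<dots> = measure_pmf.expectation p1 (\<lambda>x. measure_pmf.expectation p2 (\<lambda>a. measure_pmf.expectation (K x a) (\<lambda>w. F (x, a, w))))"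
    by (intro Bochner_Integration.integral_cong refl, subst expectation_bind_pmf) (use assms in auto)
  also have "\<dots> = measure_pmf.expectation (pair_pmf p1 p2) (\<lambda>(x, a). measure_pmf.expectation (K x a) (\<lambda>w. F (x, a, w)))"
    unfolding pair_pmf_def
    apply (subst expectation_bind_pmf[where B=B])
    using b1 apply (force split: prod.splits)
    apply (intro Bochner_Integration.integral_cong refl)
    apply (subst expectation_bind_pmf[where B=B])
    using b1 apply (force split: prod.splits)
    apply simp
    done
  finally show ?thesis .
qed


lemma emp_term:
  fixes g :: "'d::finite \<Rightarrow> nat \<Rightarrow> ('d \<Rightarrow> 'o::finite) \<Rightarrow> 'a \<Rightarrow> 'o \<Rightarrow> real"
  shows "(case s of (x, a, r, x') \<Rightarrow>
        measure_pmf.expectation (step_pmf pa R M' h x a) (\<lambda>(r', x''). \<Sum>i\<in>UNIV. g i h (proj (pa i) x) a (x'' i))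
        - (\<Sum>i\<in>UNIV. g i h (proj (pa i) x) a (x' i)))
     = (\<Sum>j\<in>UNIV. Hfun M' g h j (featj pa j s))"
proof -
  obtain x a r x' where s: "s = (x, a, r, x')" by (cases s) auto
  show ?thesis
    unfolding s using step_sum[where G="\<lambda>j ob. g j h (proj (pa j) x) a ob" and pa=pa and R=R and M=M' and h=h and x=x and a=a]
    by (simp add: Hfun_def featj_def sum_subtractf)
qed

lemma pop_term:
  fixes g :: "'d::finite \<Rightarrow> nat \<Rightarrow> ('d \<Rightarrow> 'o::finite) \<Rightarrow> 'a::finite \<Rightarrow> 'o \<Rightarrow> real"
  assumes g: "\<forall>i h y a ob. g i h y a ob \<in> {-1, 1}"
  shows "measure_pmf.expectation (pair_pmf (state_dist pa mu0 Mstar \<pi>M h) (pmf_of_set (UNIV :: 'a set)))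
         (\<lambda>(x, a). measure_pmf.expectation (step_pmf pa R M' h x a) (\<lambda>(r, x'). \<Sum>i\<in>UNIV. g i h (proj (pa i) x) a (x' i))
                 - measure_pmf.expectation (step_pmf pa R Mstar h x a) (\<lambda>(r, x'). \<Sum>i\<in>UNIV. g i h (proj (pa i) x) a (x' i)))
     = (\<Sum>j\<in>UNIV. measure_pmf.expectation (sample_pmf pa R mu0 Mstar \<pi>M h) (\<lambda>s. Hfun M' g h j (featj pa j s)))"
proof -
  define P where "P = pair_pmf (state_dist pa mu0 Mstar \<pi>M h) (pmf_of_set (UNIV :: 'a set))"
  define u where "u j x a = measure_pmf.expectation (M' j h (proj (pa j) x) a) (g j h (proj (pa j) x) a)" for j x a
  define w where "w j x a = measure_pmf.expectation (Mstar j h (proj (pa j) x) a) (g j h (proj (pa j) x) a)" for j x a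
  have sample_eq: "sample_pmf pa R mu0 Mstar \<pi>M h = bind_pmf (state_dist pa mu0 Mstar \<pi>M h)
     (\<lambda>x. bind_pmf (pmf_of_set (UNIV :: 'a set)) (\<lambda>a. bind_pmf (step_pmf pa R Mstar h x a) (\<lambda>ww. return_pmf (x, a, ww))))"
    unfolding sample_pmf_def by (simp add: case_prod_unfold)
  have each: "measure_pmf.expectation (sample_pmf pa R mu0 Mstar \<pi>M h) (\<lambda>s. Hfun M' g h j (featj pa j s))
      = measure_pmf.expectation P (\<lambda>(x, a). u j x a - w j x a)" for j
  proof -
    have "measure_pmf.expectation (sample_pmf pa R mu0 Mstar \<pi>M h) (\<lambda>s. Hfun M' g h j (featj pa j s))
       = measure_pmf.expectation P (\<lambda>(x, a). measure_pmf.expectation (step_pmf pa R Mstar h x a)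
            (\<lambda>ww. Hfun M' g h j (featj pa j (x, a, ww))))"
      unfolding sample_eq P_def
      by (rule triple_bind[where B=2, unfolded case_prod_eta]) (rule Hfun_bound[OF g])
    also have "\<dots> = measure_pmf.expectation P (\<lambda>(x, a). u j x a - w j x a)"
    proof (intro Bochner_Integration.integral_cong refl, clarify)
      fix x a
      have "(\<lambda>ww. Hfun M' g h j (featj pa j (x, a, ww))) = (\<lambda>(r, x'). u j x a - g j h (proj (pa j) x) a (x' j))"
        by (auto simp: Hfun_def featj_def u_def)
      then show "measure_pmf.expectation (step_pmf pa R Mstar h x a) (\<lambda>ww. Hfun M' g h j (featj pa j (x, a, ww)))
          = u j x a - w j x a"
        by (simp add: step_lin w_def)
    qed
    finally show ?thesis .
  qed
  have "(\<Sum>j\<in>UNIV. measure_pmf.expectation (sample_pmf pa R mu0 Mstar \<pi>M h) (\<lambda>s. Hfun M' g h j (featj pa j s)))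
     = (\<Sum>j\<in>UNIV. measure_pmf.expectation P (\<lambda>(x, a). u j x a - w j x a))"
    by (simp add: each)
  also have "\<dots> = measure_pmf.expectation P (\<lambda>xa. \<Sum>j\<in>UNIV. (case xa of (x, a) \<Rightarrow> u j x a - w j x a))"
    by (rule Bochner_Integration.integral_sum[symmetric]) (simp add: integrable_measure_pmf_finite)
  also have "\<dots> = measure_pmf.expectation P
         (\<lambda>(x, a). measure_pmf.expectation (step_pmf pa R M' h x a) (\<lambda>(r, x'). \<Sum>i\<in>UNIV. g i h (proj (pa i) x) a (x' i))
                 - measure_pmf.expectation (step_pmf pa R Mstar h x a) (\<lambda>(r, x'). \<Sum>i\<in>UNIV. g i h (proj (pa i) x) a (x' i)))"
    by (intro Bochner_Integration.integral_cong refl)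
       (auto simp: step_sum[where G="\<lambda>j ob. g j h (proj (pa j) _) _ ob"] u_def w_def sum_subtractf)
  finally show ?thesis unfolding P_def by simp
qed


lemma sup_diff:
  fixes X Y :: "'f \<Rightarrow> real"
  assumes "A \<noteq> {}" "\<And>f. f \<in> A \<Longrightarrow> \<bar>X f\<bar> \<le> B" "\<And>f. f \<in> A \<Longrightarrow> \<bar>Y f\<bar> \<le> B"
    "\<And>f. f \<in> A \<Longrightarrow> \<bar>X f - Y f\<bar> \<le> c"
  shows "\<bar>(SUP f\<in>A. X f) - (SUP f\<in>A. Y f)\<bar> \<le> c"
proof -
  have bX: "bdd_above (X ` A)" by (rule bdd_aboveI[where M=B]) (use assms(2) in force)
  have bY: "bdd_above (Y ` A)" by (rule bdd_aboveI[where M=B]) (use assms(3) in force)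
  have 1: "(SUP f\<in>A. X f) \<le> (SUP f\<in>A. Y f) + c"
  proof (rule cSUP_least[OF assms(1)])
    fix f assume f: "f \<in> A"
    have "Y f \<le> (SUP f\<in>A. Y f)" by (rule cSUP_upper[OF f bY])
    then show "X f \<le> (SUP f\<in>A. Y f) + c" using assms(4)[OF f] by linarith
  qed
  have 2: "(SUP f\<in>A. Y f) \<le> (SUP f\<in>A. X f) + c"
  proof (rule cSUP_least[OF assms(1)])
    fix f assume f: "f \<in> A"
    have "X f \<le> (SUP f\<in>A. X f)" by (rule cSUP_upper[OF f bX])
    then show "Y f \<le> (SUP f\<in>A. X f) + c" using assms(4)[OF f] by linarith
  qed
  from 1 2 show ?thesis by linarith
qed

lemma det_bound:
  fixes pa :: "'d::finite \<Rightarrow> 'd set"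
    and R :: "('d, 'o::finite, 'a::finite) rewardfn"
    and M' Mstar :: "('d, 'o, 'a) model"
  shows "\<bar>W_F_hat pa R M' h n D - W_F pa R mu0 Mstar \<pi>M M' h\<bar>
     \<le> 2 * (\<Sum>j\<in>UNIV. devS (Zset pa j) (sample_pmf pa R mu0 Mstar \<pi>M h) (featj pa j) n D)"
proof -
  define S where "S = sample_pmf pa R mu0 Mstar \<pi>M h"
  define Emp where "Emp f = (1 / real n) * (\<Sum>i<n. case D i of (x, a, r, x') \<Rightarrow>
        measure_pmf.expectation (step_pmf pa R M' h x a) (\<lambda>(r', x''). f h x a r' x'')
        - f h x a r x')" for f :: "nat \<Rightarrow> ('d \<Rightarrow> 'o) \<Rightarrow> 'a \<Rightarrow> real \<Rightarrow> ('d \<Rightarrow> 'o) \<Rightarrow> real"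
  define Pop where "Pop f = measure_pmf.expectation
         (pair_pmf (state_dist pa mu0 Mstar \<pi>M h) (pmf_of_set (UNIV :: 'a set)))
         (\<lambda>(x, a). measure_pmf.expectation (step_pmf pa R M' h x a) (\<lambda>(r, x'). f h x a r x')
                 - measure_pmf.expectation (step_pmf pa R Mstar h x a) (\<lambda>(r, x'). f h x a r x'))"
    for f :: "nat \<Rightarrow> ('d \<Rightarrow> 'o) \<Rightarrow> 'a \<Rightarrow> real \<Rightarrow> ('d \<Rightarrow> 'o) \<Rightarrow> real"
  define dv where "dv = (\<Sum>j\<in>UNIV. devS (Zset pa j) S (featj pa j) n D)"
  have key: "\<bar>Emp f\<bar> \<le> 2 * real CARD('d) \<and> \<bar>Pop f\<bar> \<le> 2 * real CARD('d) \<and> \<bar>Emp f - Pop f\<bar> \<le> 2 * dv"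
    if f: "f \<in> testF pa" for f
  proof -
    from f obtain g where g: "\<forall>i h y a ob. g i h y a ob \<in> {-1, 1}"
      and fdef: "f = (\<lambda>h x a r x'. \<Sum>i\<in>UNIV. g i h (proj (pa i) x) a (x' i))"
      unfolding testF_def by blast
    define T where "T j = (\<Sum>i<n. Hfun M' g h j (featj pa j (D i))) / real n" for j
    define U where "U j = measure_pmf.expectation S (\<lambda>s. Hfun M' g h j (featj pa j s))" for j
    have E1: "Emp f = (\<Sum>j\<in>UNIV. T j)"
    proof -
      have "Emp f = (1 / real n) * (\<Sum>i<n. \<Sum>j\<in>UNIV. Hfun M' g h j (featj pa j (D i)))"
        unfolding Emp_def fdef by (simp only: emp_term)
      also have "\<dots> = (\<Sum>j\<in>UNIV. T j)"
        unfolding T_def by (simp add: sum.swap[of _ "{..<n}"] sum_divide_distrib)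
      finally show ?thesis .
    qed
    have P1: "Pop f = (\<Sum>j\<in>UNIV. U j)"
      unfolding Pop_def fdef U_def S_def using pop_term[OF g] by simp
    have Tb: "\<bar>T j\<bar> \<le> 2" for j
    proof -
      have "\<bar>\<Sum>i<n. Hfun M' g h j (featj pa j (D i))\<bar> \<le> (\<Sum>i<n. 2)"
        by (rule order.trans[OF sum_abs sum_mono]) (rule Hfun_bound[OF g])
      then have "\<bar>\<Sum>i<n. Hfun M' g h j (featj pa j (D i))\<bar> \<le> 2 * real n" by simp
      then show ?thesis unfolding T_def
        by (cases "n = 0") (auto simp: abs_div field_simps)
    qed
    have Ub: "\<bar>U j\<bar> \<le> 2" for j unfolding U_def by (rule abs_expectation_le) (rule Hfun_bound[OF g])
    have TU: "\<bar>T j - U j\<bar> \<le> 2 * devS (Zset pa j) S (featj pa j) n D" for j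
      unfolding T_def U_def
      by (rule L1) (auto simp: featj_in Hfun_bound[OF g])
    have "\<bar>Emp f\<bar> \<le> (\<Sum>j\<in>UNIV. \<bar>T j\<bar>)" unfolding E1 by (rule sum_abs)
    also have "\<dots> \<le> (\<Sum>j\<in>(UNIV::'d set). 2)" by (rule sum_mono) (rule Tb)
    finally have a: "\<bar>Emp f\<bar> \<le> 2 * real CARD('d)" by simp
    have "\<bar>Pop f\<bar> \<le> (\<Sum>j\<in>UNIV. \<bar>U j\<bar>)" unfolding P1 by (rule sum_abs)
    also have "\<dots> \<le> (\<Sum>j\<in>(UNIV::'d set). 2)" by (rule sum_mono) (rule Ub)
    finally have b: "\<bar>Pop f\<bar> \<le> 2 * real CARD('d)" by simp
    have "\<bar>Emp f - Pop f\<bar> = \<bar>\<Sum>j\<in>UNIV. T j - U j\<bar>" unfolding E1 P1 by (simp add: sum_subtractf)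
    also have "\<dots> \<le> (\<Sum>j\<in>UNIV. \<bar>T j - U j\<bar>)" by (rule sum_abs)
    also have "\<dots> \<le> (\<Sum>j\<in>UNIV. 2 * devS (Zset pa j) S (featj pa j) n D)" by (rule sum_mono) (rule TU)
    finally have c: "\<bar>Emp f - Pop f\<bar> \<le> 2 * dv" unfolding dv_def by (simp add: sum_distrib_left)
    from a b c show ?thesis by blast
  qed
  have ne: "testF pa \<noteq> {}"
  proof -
    have "(\<lambda>h x a r x'. \<Sum>i\<in>UNIV. (\<lambda>i h y a ob. 1::real) i h (proj (pa i) x) a (x' i)) \<in> testF pa"
      unfolding testF_def by (rule CollectI, rule exI[where x="\<lambda>i h y a ob. 1::real"]) simp
    then show ?thesis by blast
  qed
  have "\<bar>(SUP f\<in>testF pa. Emp f) - (SUP f\<in>testF pa. Pop f)\<bar> \<le> 2 * dv"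
    by (rule sup_diff[OF ne]) (use key in blast)+
  then show ?thesis unfolding W_F_hat_def W_F_def Emp_def Pop_def dv_def S_def .
qed


lemma bad_j:
  fixes S :: "'b pmf" and \<phi> :: "'b \<Rightarrow> 'z"
  assumes Zs: "finite Zs" "\<And>x. \<phi> x \<in> Zs" and n: "n > 0" and t: "t \<ge> 0"
  shows "measure_pmf.prob (Pi_pmf {..<n} dflt (\<lambda>_. S)) {D. devS Zs S \<phi> n D > t}
     \<le> 2 ^ card Zs * exp (- real n * t^2 / 2)"
proof -
  define SG where "SG = PiE Zs (\<lambda>_. {-1, 1::real})"
  define A where "A s = {D. (\<Sum>i<n. s (\<phi> (D i))) / real n \<ge> measure_pmf.expectation S (\<lambda>x. s (\<phi> x)) + t}" for s
  have fin: "finite SG" unfolding SG_def using Zs(1) by (intro finite_PiE) auto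
  have cardSG: "card SG = 2 ^ card Zs" unfolding SG_def using Zs(1) by (simp add: card_PiE numeral_2_eq_2)
  have sub: "{D. devS Zs S \<phi> n D > t} \<subseteq> (\<Union>s\<in>SG. A s)"
  proof
    fix D assume "D \<in> {D. devS Zs S \<phi> n D > t}"
    then have gt: "devS Zs S \<phi> n D > t" by simp
    define s0 where "s0 = restrict (\<lambda>z. if emp \<phi> n D z \<ge> pmf (map_pmf \<phi> S) z then 1 else (-1::real)) Zs"
    have s0: "s0 \<in> SG" unfolding s0_def SG_def by auto
    have "devS Zs S \<phi> n D = (\<Sum>z\<in>Zs. (emp \<phi> n D z - pmf (map_pmf \<phi> S) z) * s0 z)"
      unfolding dev_sign s0_def by (intro sum.cong refl) auto
    also have "\<dots> = (\<Sum>i<n. s0 (\<phi> (D i))) / real n - measure_pmf.expectation S (\<lambda>x. s0 (\<phi> x))"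
      by (rule ident[symmetric]) (use Zs in auto)
    finally have "D \<in> A s0" using gt unfolding A_def by simp
    then show "D \<in> (\<Union>s\<in>SG. A s)" using s0 by blast
  qed
  have "measure_pmf.prob (Pi_pmf {..<n} dflt (\<lambda>_. S)) {D. devS Zs S \<phi> n D > t}
      \<le> measure_pmf.prob (Pi_pmf {..<n} dflt (\<lambda>_. S)) (\<Union>s\<in>SG. A s)"
    by (rule measure_pmf.finite_measure_mono[OF sub]) simp
  also have "\<dots> \<le> (\<Sum>s\<in>SG. measure_pmf.prob (Pi_pmf {..<n} dflt (\<lambda>_. S)) (A s))"
    by (rule measure_pmf.finite_measure_subadditive_finite[OF fin]) simp
  also have "\<dots> \<le> (\<Sum>s\<in>SG. exp (- real n * t^2 / 2))"
  proof (rule sum_mono)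
    fix s assume s: "s \<in> SG"
    have "s (\<phi> x) \<in> {-1..1}" for x
    proof -
      have "s (\<phi> x) \<in> {-1, 1}" using s Zs(2)[of x] unfolding SG_def by (auto simp: PiE_def Pi_def)
      then show ?thesis by auto
    qed
    then show "measure_pmf.prob (Pi_pmf {..<n} dflt (\<lambda>_. S)) (A s) \<le> exp (- real n * t^2 / 2)"
      unfolding A_def by (rule hoeff_pmf[OF _ n t])
  qed
  also have "\<dots> = 2 ^ card Zs * exp (- real n * t^2 / 2)" using cardSG by simp
  finally show ?thesis .
qed


lemma nat_add_le_mult: "(2::nat) \<le> a \<Longrightarrow> 2 \<le> P \<Longrightarrow> a + P \<le> a * P"
  using nat_le_iff_add by auto

lemma sum_le_prod:
  fixes a :: "'i \<Rightarrow> nat"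
  assumes "finite A" "A \<noteq> {}" "\<And>j. j \<in> A \<Longrightarrow> a j \<ge> 2"
  shows "sum a A \<le> prod a A"
  using assms
proof (induction A rule: finite_ne_induct)
  case (singleton x) then show ?case by simp
next
  case (insert x F)
  obtain y where y: "y \<in> F" using insert.hyps(2) by blast
  have "a y \<le> sum a F" by (rule member_le_sum) (use y insert.hyps(1) in auto)
  then have P2: "2 \<le> prod a F" using insert.IH insert.prems y by fastforce
  have "sum a (insert x F) = a x + sum a F" using insert.hyps by simp
  also have "\<dots> \<le> a x + prod a F" using insert.IH insert.prems by simp
  also have "\<dots> \<le> a x * prod a F" by (rule nat_add_le_mult) (use insert.prems P2 in auto)
  also have "\<dots> = prod a (insert x F)" using insert.hyps by simp
  finally show ?case .
qed

lemma card_Zset: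
  "card (Zset pa j :: (('d::finite \<Rightarrow> 'o::finite) \<times> 'a::finite \<times> 'o) set)
     \<le> CARD('o) ^ card (pa j) * CARD('a) * CARD('o)"
proof -
  have sub: "range (proj (pa j) :: ('d \<Rightarrow> 'o) \<Rightarrow> _) \<subseteq> PiE (pa j) (\<lambda>_. UNIV)"
    unfolding proj_def by auto
  have "card (range (proj (pa j) :: ('d \<Rightarrow> 'o) \<Rightarrow> _)) \<le> card (PiE (pa j) (\<lambda>_. (UNIV :: 'o set)))"
    by (rule card_mono[OF _ sub]) (simp add: finite_PiE)
  also have "\<dots> = CARD('o) ^ card (pa j)" by (simp add: card_PiE)
  finally have "card (range (proj (pa j) :: ('d \<Rightarrow> 'o) \<Rightarrow> _)) \<le> CARD('o) ^ card (pa j)" .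
  then show ?thesis unfolding Zset_def by (simp add: card_cartesian_product)
qed

theorem mainTheorem9:
  fixes H :: nat and h :: nat and n :: nat
    and pa :: "'d::finite \<Rightarrow> 'd set"
    and R :: "('d, 'o::finite, 'a::finite) rewardfn"
    and mu0 :: "('d \<Rightarrow> 'o) pmf"
    and Mstar M :: "('d, 'o, 'a) model"
    and \<pi>M :: "('d, 'o, 'a) policy"
    and \<phi> \<delta> :: real
  assumes h: "h \<in> {1..H}"
    and piM: "greedy_optimal H pa R M \<pi>M"
    and phi: "\<phi> > 0" and delta: "\<delta> > 0"
    and n: "real n \<ge> 8 * real CARD('d) ^ 2
              * (Lparam H pa TYPE('o) TYPE('a) * ln (8 * real CARD('d) * real CARD('o) / \<phi>)
                 + ln (2 / \<delta>)) / \<phi> ^ 2"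
  shows "measure_pmf.prob (dataset_pmf n (sample_pmf pa R mu0 Mstar \<pi>M h))
           {D. \<forall>M' :: ('d, 'o, 'a) model.
                 \<bar>W_F_hat pa R M' h n D - W_F pa R mu0 Mstar \<pi>M M' h\<bar> \<le> \<phi>}
         \<ge> 1 - \<delta>"
proof -
  define S where "S = sample_pmf pa R mu0 Mstar \<pi>M h"
  define P where "P = dataset_pmf n S"
  define T where "T = {D. \<forall>M' :: ('d, 'o, 'a) model.
                 \<bar>W_F_hat pa R M' h n D - W_F pa R mu0 Mstar \<pi>M M' h\<bar> \<le> \<phi>}"
  define dv where "dv D = (\<Sum>j\<in>UNIV. devS (Zset pa j) S (featj pa j) n D)" for D
  define d where "d = real CARD('d)"
  have d1: "d \<ge> 1" unfolding d_def by simp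
  have detT: "D \<in> T" if "2 * dv D \<le> \<phi>" for D
    unfolding T_def using det_bound[of pa R _ h n D mu0 Mstar \<pi>M] that unfolding dv_def S_def
    by (blast intro: order.trans)
  have dev2: "devS (Zset pa j) S (featj pa j) n D \<le> 2" for j D
    by (rule dev_le2) (auto simp: featj_in)
  show ?thesis
  proof (cases "\<delta> \<ge> 1 \<or> \<phi> \<ge> 4 * d")
    case True
    then show ?thesis
    proof
      assume "\<delta> \<ge> 1"
      moreover have "0 \<le> measure_pmf.prob (dataset_pmf n (sample_pmf pa R mu0 Mstar \<pi>M h)) T"
        by (rule measure_nonneg)
      ultimately show ?thesis unfolding T_def by linarith
    next
      assume ph: "\<phi> \<ge> 4 * d"
      have "D \<in> T" for D
      proof (rule detT)
        have "dv D \<le> (\<Sum>j\<in>(UNIV::'d set). 2)" unfolding dv_def by (rule sum_mono) (rule dev2)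
        then show "2 * dv D \<le> \<phi>" using ph unfolding d_def by simp
      qed
      then have "T = UNIV" by blast
      then show ?thesis unfolding T_def[symmetric] using delta by simp
    qed
  next
    case False
    then have dl: "\<delta> < 1" and pl: "\<phi> < 4 * d" by auto
    define t where "t = \<phi> / (2 * d)"
    have t0: "t \<ge> 0" unfolding t_def using phi d1 by simp
    define L where "L = Lparam H pa TYPE('o) TYPE('a)"
    define c where "c = 8 * real CARD('d) * real CARD('o) / \<phi>"
    define m where "m j = CARD('o) ^ card (pa j) * CARD('a) * CARD('o)" for j :: 'd
    define N where "N = (\<Sum>j\<in>UNIV. m j)"
    have H1: "H \<ge> 1" using h by simp
    have LN: "L \<ge> real N"
    proof -
      have "real N = (\<Sum>j\<in>UNIV. real CARD('a) * real CARD('o) ^ (1 + card (pa j)))"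
        unfolding N_def m_def by (simp add: algebra_simps)
      also have "\<dots> \<le> (\<Sum>j\<in>UNIV. real H * real CARD('a) * real CARD('o) ^ (1 + card (pa j)))"
        by (intro sum_mono) (use H1 in \<open>auto intro: mult_right_mono\<close>)
      finally show ?thesis unfolding L_def Lparam_def .
    qed
    have c2: "c \<ge> 2"
    proof -
      have "8 * d * real CARD('o) / \<phi> \<ge> 8 * d * 1 / (4 * d)"
        using phi pl d1 by (intro frac_le mult_mono) auto
      then show ?thesis unfolding c_def d_def using d1 unfolding d_def by simp
    qed
    have lnc: "ln c \<ge> ln 2" using c2 by simp
    have L0: "L \<ge> 0" using LN by linarith
    have ln2d: "ln (2 / \<delta>) > 0" using dl delta by simp
    have key: "real n * t^2 / 2 \<ge> L * ln c + ln (2 / \<delta>)"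
    proof -
      have "real n * \<phi>^2 \<ge> 8 * d^2 * (L * ln c + ln (2 / \<delta>))"
        using n phi unfolding L_def c_def d_def by (simp add: field_simps)
      then show ?thesis unfolding t_def using phi d1 by (simp add: field_simps power2_eq_square)
    qed
    have npos: "n > 0"
    proof -
      have "L * ln c \<ge> 0" using L0 lnc by (simp add: order.trans[OF _ lnc])
      then have "real n * t^2 / 2 > 0" using key ln2d by linarith
      then show ?thesis by (cases n) auto
    qed
    define Ex where "Ex = exp (- real n * t^2 / 2)"
    have Exb: "Ex * 2 ^ N \<le> \<delta> / 2"
    proof -
      have "Ex \<le> exp (- (real N * ln 2) - ln (2 / \<delta>))"
      proof -
        have "real N * ln 2 \<le> L * ln c"
          using LN lnc L0 by (meson mult_mono ln_ge_zero order.trans of_nat_0_le_iff one_le_numeral)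
        then show ?thesis unfolding Ex_def using key by simp
      qed
      also have "\<dots> = (\<delta> / 2) / 2 ^ N"
        using delta by (simp add: exp_diff exp_minus exp_of_nat_mult field_simps)
      finally show ?thesis by (simp add: field_simps)
    qed
    have bad: "measure_pmf.prob P (UNIV - {D. \<forall>j. devS (Zset pa j) S (featj pa j) n D \<le> t}) \<le> \<delta>"
    proof -
      have "UNIV - {D. \<forall>j. devS (Zset pa j) S (featj pa j) n D \<le> t}
          = (\<Union>j\<in>UNIV. {D. devS (Zset pa j) S (featj pa j) n D > t})" by (auto simp: not_le dest: spec[where x=j] leD)
      then have "measure_pmf.prob P (UNIV - {D. \<forall>j. devS (Zset pa j) S (featj pa j) n D \<le> t})
          \<le> (\<Sum>j\<in>UNIV. measure_pmf.prob P {D. devS (Zset pa j) S (featj pa j) n D > t})"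
        by (simp add: measure_pmf.finite_measure_subadditive_finite)
      also have "\<dots> \<le> (\<Sum>j\<in>UNIV. 2 ^ card (Zset pa j :: (('d \<Rightarrow> 'o) \<times> 'a \<times> 'o) set) * Ex)"
        unfolding P_def dataset_pmf_def Ex_def
        by (intro sum_mono bad_j npos t0) (auto simp: featj_in)
      also have "\<dots> \<le> (\<Sum>j\<in>UNIV. 2 ^ m j * Ex)"
        by (intro sum_mono mult_right_mono) (auto simp: Ex_def m_def card_Zset)
      also have "\<dots> = real (\<Sum>j\<in>UNIV. 2 ^ m j) * Ex" by (simp add: sum_distrib_right)
      also have "\<dots> \<le> real (\<Prod>j\<in>UNIV. 2 ^ m j) * Ex"
      proof -
        have "m j \<ge> 1" for j unfolding m_def by simp
        then have "(2::nat) ^ m j \<ge> 2" for j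
          by (metis one_le_numeral power_increasing power_one_right)
        then have "(\<Sum>j\<in>UNIV. (2::nat) ^ m j) \<le> (\<Prod>j\<in>UNIV. 2 ^ m j)"
          by (intro sum_le_prod) auto
        then have "real (\<Sum>j\<in>UNIV. (2::nat) ^ m j) \<le> real (\<Prod>j\<in>UNIV. (2::nat) ^ m j)"
          by (simp only: of_nat_le_iff)
        then show ?thesis unfolding Ex_def by (rule mult_right_mono) simp
      qed
      also have "\<dots> = 2 ^ N * Ex" unfolding N_def by (simp add: power_sum)
      also have "\<dots> \<le> \<delta>" using Exb delta by (simp add: mult.commute)
      finally show ?thesis .
    qed
    have goodT: "{D. \<forall>j. devS (Zset pa j) S (featj pa j) n D \<le> t} \<subseteq> T"
    proof
      fix D assume "D \<in> {D. \<forall>j. devS (Zset pa j) S (featj pa j) n D \<le> t}"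
      then have "dv D \<le> (\<Sum>j\<in>(UNIV::'d set). t)" unfolding dv_def by (intro sum_mono) auto
      then have "2 * dv D \<le> \<phi>" unfolding t_def d_def using d1 unfolding d_def by simp
      then show "D \<in> T" by (rule detT)
    qed
    have "1 - \<delta> \<le> 1 - measure_pmf.prob P (UNIV - {D. \<forall>j. devS (Zset pa j) S (featj pa j) n D \<le> t})"
      using bad by simp
    also have "\<dots> = measure_pmf.prob P {D. \<forall>j. devS (Zset pa j) S (featj pa j) n D \<le> t}"
      using measure_pmf.prob_compl[of "{D. \<forall>j. devS (Zset pa j) S (featj pa j) n D \<le> t}" P] by simp
    also have "\<dots> \<le> measure_pmf.prob P T"
      by (rule measure_pmf.finite_measure_mono[OF goodT]) simp
    finally show ?thesis unfolding P_def S_def T_def .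
  qed
qed

end
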